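(* Let $\beta\ge1$. For every $\delta>0$ there exists an instance of $1\mid t_j\mid\sum C_j$ with obligatory tests on which $\beta$-SORT satisfies \[ \frac{\mathit{ALG}}{\mathit{OPT}}\ge\frac{\sqrt{4\beta(\beta^2+\beta-1)+1}+1}{2\beta}-\delta. \]
   Context: Scheduling with obligatory tests: jobs $J=\{1,\dots,n\}$ on a single machine; job $j$ has a known test time $t_j\ge0$ and a processing time $p_j\ge0$ revealed only when its test has been executed. The test must be executed before the processing part (which may start any time later); operations are non-preemptive, one at a time. $C_j$ is the completion time of the processing part of $j$; objective $\sum_jC_j$. $\mathit{OPT}$ is the optimal offline objective value (all tests must also be executed); $\mathit{ALG}$ is the algorithm's value. Algorithm $\beta$-SORT (parameter $\beta>0$): maintain a priority queue of available operations, initially containing the test of every job $j$ with priority $\beta t_j$; repeatedly remove a minimum-priority operation and execute it immediately; after executing the test of $j$, insert the processing part of $j$ with priority $p_j$. *)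

theory Defs
  imports Complex_Main
begin

datatype operation = Test nat | Proc nat

definition valid_instance :: "nat \<Rightarrow> (nat \<Rightarrow> real) \<Rightarrow> (nat \<Rightarrow> real) \<Rightarrow> bool" where
  "valid_instance n t p \<longleftrightarrow> (\<forall>j<n. t j \<ge> 0 \<and> p j \<ge> 0)"

definition all_ops :: "nat \<Rightarrow> operation set" where
  "all_ops n = Test ` {..<n} \<union> Proc ` {..<n}"

fun op_len :: "(nat \<Rightarrow> real) \<Rightarrow> (nat \<Rightarrow> real) \<Rightarrow> operation \<Rightarrow> real" where
  "op_len t p (Test j) = t j"
| "op_len t p (Proc j) = p j"

definition feasible_schedule :: "nat \<Rightarrow> operation list \<Rightarrow> bool" where
  "feasible_schedule n \<sigma> \<longleftrightarrow> distinct \<sigma> \<and> set \<sigma> = all_ops n \<and>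
     (\<forall>i k. i < length \<sigma> \<longrightarrow> k < length \<sigma> \<longrightarrow> (\<exists>j. \<sigma> ! i = Test j \<and> \<sigma> ! k = Proc j) \<longrightarrow> i < k)"

definition completion_at :: "(nat \<Rightarrow> real) \<Rightarrow> (nat \<Rightarrow> real) \<Rightarrow> operation list \<Rightarrow> nat \<Rightarrow> real" where
  "completion_at t p \<sigma> i = (\<Sum>k\<le>i. op_len t p (\<sigma> ! k))"

definition compl_time :: "(nat \<Rightarrow> real) \<Rightarrow> (nat \<Rightarrow> real) \<Rightarrow> operation list \<Rightarrow> nat \<Rightarrow> real" where
  "compl_time t p \<sigma> j = completion_at t p \<sigma> (THE i. i < length \<sigma> \<and> \<sigma> ! i = Proc j)"

definition cost :: "nat \<Rightarrow> (nat \<Rightarrow> real) \<Rightarrow> (nat \<Rightarrow> real) \<Rightarrow> operation list \<Rightarrow> real" where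
  "cost n t p \<sigma> = (\<Sum>j<n. compl_time t p \<sigma> j)"

definition OPT :: "nat \<Rightarrow> (nat \<Rightarrow> real) \<Rightarrow> (nat \<Rightarrow> real) \<Rightarrow> real" where
  "OPT n t p = Min {cost n t p \<sigma> | \<sigma>. feasible_schedule n \<sigma>}"

definition available :: "nat \<Rightarrow> operation list \<Rightarrow> operation set" where
  "available n d = {Test j | j. j < n \<and> Test j \<notin> set d} \<union>
                   {Proc j | j. j < n \<and> Test j \<in> set d \<and> Proc j \<notin> set d}"

fun priority :: "real \<Rightarrow> (nat \<Rightarrow> real) \<Rightarrow> (nat \<Rightarrow> real) \<Rightarrow> operation \<Rightarrow> real" where
  "priority \<beta> t p (Test j) = \<beta> * t j"
| "priority \<beta> t p (Proc j) = p j"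

text \<open>sigma is a possible run of beta-SORT (ties broken arbitrarily): at every step a
  minimum-priority available operation is executed, until all operations are done.\<close>
definition beta_sort_run :: "real \<Rightarrow> nat \<Rightarrow> (nat \<Rightarrow> real) \<Rightarrow> (nat \<Rightarrow> real) \<Rightarrow> operation list \<Rightarrow> bool" where
  "beta_sort_run \<beta> n t p \<sigma> \<longleftrightarrow> length \<sigma> = 2 * n \<and>
     (\<forall>i < length \<sigma>. \<sigma> ! i \<in> available n (take i \<sigma>) \<and>
        (\<forall>x \<in> available n (take i \<sigma>). priority \<beta> t p (\<sigma> ! i) \<le> priority \<beta> t p x))"

end

theory Submission
  imports Defs
begin

definition prefix_run :: "real \<Rightarrow> nat \<Rightarrow> (nat \<Rightarrow> real) \<Rightarrow> (nat \<Rightarrow> real) \<Rightarrow> operation list \<Rightarrow> bool" where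
  "prefix_run \<beta> n t p \<sigma> \<longleftrightarrow> (\<forall>i < length \<sigma>. \<sigma> ! i \<in> available n (take i \<sigma>) \<and>
        (\<forall>x \<in> available n (take i \<sigma>). priority \<beta> t p (\<sigma> ! i) \<le> priority \<beta> t p x))"

lemma available_sub: "available n d \<subseteq> all_ops n"
  unfolding available_def all_ops_def by auto

lemma available_notin: "x \<in> available n d \<Longrightarrow> x \<notin> set d"
  unfolding available_def by auto

lemma card_all_ops: "card (all_ops n) = 2 * n"
proof -
  have "card (all_ops n) = card (Test ` {..<n}) + card (Proc ` {..<n})"
    unfolding all_ops_def by (rule card_Un_disjoint) auto
  also have "\<dots> = n + n" by (simp add: card_image inj_on_def)
  finally show ?thesis by simp
qed

lemma finite_all_ops: "finite (all_ops n)" unfolding all_ops_def by auto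

lemma set_take_nth: "q \<le> length xs \<Longrightarrow> set (take q xs) = (\<lambda>i. xs ! i) ` {..<q}"
  by (auto simp: set_conv_nth image_iff) (metis less_le_trans nth_take)+

lemma prefix_run_distinct:
  assumes "prefix_run \<beta> n t p \<sigma>" shows "distinct \<sigma>"
  unfolding distinct_conv_nth
proof (intro allI impI)
  fix i j assume ij: "i < length \<sigma>" "j < length \<sigma>" "i \<noteq> j"
  have *: "\<And>a b. a < length \<sigma> \<Longrightarrow> b < a \<Longrightarrow> \<sigma> ! a \<noteq> \<sigma> ! b"
  proof -
    fix a b assume ab: "a < length \<sigma>" "b < a"
    have "\<sigma> ! a \<in> available n (take a \<sigma>)" using assms ab unfolding prefix_run_def by auto
    hence "\<sigma> ! a \<notin> set (take a \<sigma>)" by (rule available_notin)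
    moreover have "\<sigma> ! b \<in> set (take a \<sigma>)" using ab by (auto simp: set_take_nth)
    ultimately show "\<sigma> ! a \<noteq> \<sigma> ! b" by auto
  qed
  show "\<sigma> ! i \<noteq> \<sigma> ! j" using ij *[of i j] *[of j i] by (cases "j < i") auto
qed

lemma prefix_run_set: "prefix_run \<beta> n t p \<sigma> \<Longrightarrow> set \<sigma> \<subseteq> all_ops n"
  unfolding prefix_run_def using available_sub by (auto simp: set_conv_nth) blast

lemma run_set:
  assumes "beta_sort_run \<beta> n t p \<sigma>"
  shows "distinct \<sigma>" "set \<sigma> = all_ops n" "length \<sigma> = 2 * n"
proof -
  have pr: "prefix_run \<beta> n t p \<sigma>" using assms unfolding beta_sort_run_def prefix_run_def by auto
  show d: "distinct \<sigma>" by (rule prefix_run_distinct[OF pr])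
  show l: "length \<sigma> = 2 * n" using assms unfolding beta_sort_run_def by auto
  show "set \<sigma> = all_ops n"
    by (rule card_subset_eq[OF finite_all_ops prefix_run_set[OF pr]])
       (simp add: distinct_card[OF d] l card_all_ops)
qed

lemma prefix_run_exists: "L \<le> 2 * n \<Longrightarrow> \<exists>\<sigma>. length \<sigma> = L \<and> prefix_run \<beta> n t p \<sigma>"
proof (induction L)
  case 0 then show ?case by (auto simp: prefix_run_def)
next
  case (Suc L)
  then obtain \<sigma> where s: "length \<sigma> = L" "prefix_run \<beta> n t p \<sigma>" by auto
  have d: "distinct \<sigma>" by (rule prefix_run_distinct[OF s(2)])
  have "card (set \<sigma>) < card (all_ops n)" using Suc.prems s(1) d by (simp add: distinct_card card_all_ops)
  then obtain y where y: "y \<in> all_ops n" "y \<notin> set \<sigma>" using prefix_run_set[OF s(2)]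
    by (metis psubsetI psubset_imp_ex_mem Diff_iff less_irrefl)
  have ne: "available n \<sigma> \<noteq> {}"
  proof (cases y)
    case (Test j) then show ?thesis using y unfolding all_ops_def available_def by auto
  next
    case (Proc j) then show ?thesis using y unfolding all_ops_def available_def by (cases "Test j \<in> set \<sigma>") auto
  qed
  have fin: "finite (available n \<sigma>)" using available_sub finite_all_ops by (rule finite_subset)
  define \<mu> where "\<mu> = Min (priority \<beta> t p ` available n \<sigma>)"
  have "\<mu> \<in> priority \<beta> t p ` available n \<sigma>" unfolding \<mu>_def using fin ne by (intro Min_in) auto
  then obtain x where x: "x \<in> available n \<sigma>" "priority \<beta> t p x = \<mu>" by auto
  have xm: "\<forall>z\<in>available n \<sigma>. priority \<beta> t p x \<le> priority \<beta> t p z"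
    using x fin unfolding \<mu>_def by auto
  have "prefix_run \<beta> n t p (\<sigma> @ [x])"
    unfolding prefix_run_def
  proof (intro allI impI)
    fix i assume i: "i < length (\<sigma> @ [x])"
    show "(\<sigma> @ [x]) ! i \<in> available n (take i (\<sigma> @ [x])) \<and>
         (\<forall>z\<in>available n (take i (\<sigma> @ [x])). priority \<beta> t p ((\<sigma> @ [x]) ! i) \<le> priority \<beta> t p z)"
    proof (cases "i < length \<sigma>")
      case True then show ?thesis using s(2) unfolding prefix_run_def by (auto simp: nth_append)
    next
      case False then have "i = length \<sigma>" using i by auto
      then show ?thesis using x xm by auto
    qed
  qed
  then show ?case using s(1) by (intro exI[of _ "\<sigma> @ [x]"]) auto
qed

lemma run_exists: "\<exists>\<sigma>. beta_sort_run \<beta> n t p \<sigma>"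
  using prefix_run_exists[of "2*n" n \<beta> t p] unfolding beta_sort_run_def prefix_run_def by auto

fun is_proc :: "operation \<Rightarrow> bool" where
  "is_proc (Test j) = False" | "is_proc (Proc j) = True"

lemma the_pos:
  assumes "distinct \<sigma>" "i < length \<sigma>" "\<sigma> ! i = x"
  shows "(THE i. i < length \<sigma> \<and> \<sigma> ! i = x) = i"
  using assms by (intro the_equality) (auto simp: nth_eq_iff_index_eq)

lemma cost_positions:
  assumes d: "distinct \<sigma>" and s: "set \<sigma> = all_ops n"
  shows "cost n t p \<sigma> = (\<Sum>i<length \<sigma>. if is_proc (\<sigma> ! i) then completion_at t p \<sigma> i else 0)"
proof -
  define g where "g j = (THE i. i < length \<sigma> \<and> \<sigma> ! i = Proc j)" for j
  have gj: "g j < length \<sigma> \<and> \<sigma> ! g j = Proc j" if "j < n" for j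
  proof -
    have "Proc j \<in> set \<sigma>" using s that unfolding all_ops_def by auto
    then obtain i where i: "i < length \<sigma>" "\<sigma> ! i = Proc j" by (auto simp: in_set_conv_nth)
    then show ?thesis unfolding g_def using the_pos[OF d i] by simp
  qed
  have inj: "inj_on g {..<n}"
    by (rule inj_onI) (metis gj lessThan_iff operation.inject(2))
  have img: "g ` {..<n} = {i. i < length \<sigma> \<and> is_proc (\<sigma> ! i)}"
  proof
    show "g ` {..<n} \<subseteq> {i. i < length \<sigma> \<and> is_proc (\<sigma> ! i)}" using gj by auto
    show "{i. i < length \<sigma> \<and> is_proc (\<sigma> ! i)} \<subseteq> g ` {..<n}"
    proof
      fix i assume "i \<in> {i. i < length \<sigma> \<and> is_proc (\<sigma> ! i)}"
      then have i: "i < length \<sigma>" "is_proc (\<sigma> ! i)" by auto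
      then obtain j where j: "\<sigma> ! i = Proc j" by (cases "\<sigma> ! i") auto
      have "Proc j \<in> all_ops n" using s i j by (metis nth_mem)
      then have jn: "j < n" unfolding all_ops_def by auto
      have "g j = i" unfolding g_def using the_pos[OF d i(1) j] .
      then show "i \<in> g ` {..<n}" using jn by auto
    qed
  qed
  have "cost n t p \<sigma> = (\<Sum>j<n. completion_at t p \<sigma> (g j))"
    unfolding cost_def compl_time_def g_def by simp
  also have "\<dots> = (\<Sum>i\<in>g ` {..<n}. completion_at t p \<sigma> i)"
    by (simp add: sum.reindex[OF inj])
  also have "\<dots> = (\<Sum>i\<in>{i. i < length \<sigma> \<and> is_proc (\<sigma> ! i)}. completion_at t p \<sigma> i)"
    using img by simp
  also have "\<dots> = (\<Sum>i<length \<sigma>. if is_proc (\<sigma> ! i) then completion_at t p \<sigma> i else 0)"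
    by (simp add: sum.If_cases lessThan_def Collect_conj_eq Int_commute)
  finally show ?thesis .
qed

definition opt_sched :: "nat \<Rightarrow> operation list" where
  "opt_sched n = map (\<lambda>q. if even q then Test (q div 2) else Proc (q div 2)) [0..<2*n]"

lemma opt_sched_nth: "q < 2 * n \<Longrightarrow> opt_sched n ! q = (if even q then Test (q div 2) else Proc (q div 2))"
  unfolding opt_sched_def by simp

lemma opt_sched_len: "length (opt_sched n) = 2 * n" unfolding opt_sched_def by simp

lemma opt_sched_feasible: "feasible_schedule n (opt_sched n)"
proof -
  have d: "distinct (opt_sched n)"
    unfolding opt_sched_def distinct_map
    by (auto simp: inj_on_def split: if_splits) (metis dvd_mult_div_cancel odd_two_times_div_two_succ)+
  have s: "set (opt_sched n) = all_ops n"
  proof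
    show "set (opt_sched n) \<subseteq> all_ops n" unfolding opt_sched_def all_ops_def by auto
    show "all_ops n \<subseteq> set (opt_sched n)"
    proof
      fix x assume "x \<in> all_ops n"
      then obtain j where "j < n" "x = Test j \<or> x = Proc j" unfolding all_ops_def by auto
      then show "x \<in> set (opt_sched n)" unfolding opt_sched_def
        by (auto simp: image_iff intro: bexI[of _ "2*j"] bexI[of _ "2*j+1"])
    qed
  qed
  have o: "i < k" if "i < 2 * n" "k < 2 * n" "opt_sched n ! i = Test j" "opt_sched n ! k = Proc j" for i k j
    using that by (auto simp: opt_sched_nth split: if_splits) presburger
  show ?thesis unfolding feasible_schedule_def using d s o opt_sched_len by auto
qed

lemma opt_sched_compl:
  assumes "j < n"
  shows "completion_at t p (opt_sched n) (2*j+1) = (\<Sum>i\<le>j. t i + p i)"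
  using assms
proof (induction j)
  case 0
  then show ?case by (simp add: completion_at_def opt_sched_nth)
next
  case (Suc j)
  have a: "Suc (2 * Suc j) = Suc (Suc (Suc (2*j)))" by simp
  have "completion_at t p (opt_sched n) (2 * Suc j + 1) =
        completion_at t p (opt_sched n) (2*j+1) + t (Suc j) + p (Suc j)"
    unfolding completion_at_def using Suc.prems
    by (simp add: a opt_sched_nth del: One_nat_def) (simp add: opt_sched_nth)
  then show ?case using Suc by simp
qed

lemma opt_sched_cost: "cost n t p (opt_sched n) = (\<Sum>j<n. \<Sum>i\<le>j. t i + p i)"
proof -
  have d: "distinct (opt_sched n)" using opt_sched_feasible unfolding feasible_schedule_def by auto
  show ?thesis unfolding cost_def compl_time_def
  proof (rule sum.cong[OF refl])
    fix j assume "j \<in> {..<n}"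
    then have j: "j < n" by simp
    have "(THE i. i < length (opt_sched n) \<and> opt_sched n ! i = Proc j) = 2*j+1"
      by (rule the_pos[OF d]) (use j in \<open>auto simp: opt_sched_len opt_sched_nth\<close>)
    then show "completion_at t p (opt_sched n) (THE i. i < length (opt_sched n) \<and> opt_sched n ! i = Proc j) =
         (\<Sum>i\<le>j. t i + p i)" using opt_sched_compl[OF j] by simp
  qed
qed

lemma feasible_finite: "finite {\<sigma>. feasible_schedule n \<sigma>}"
proof -
  have "{\<sigma>. feasible_schedule n \<sigma>} \<subseteq> {xs. set xs \<subseteq> all_ops n \<and> length xs \<le> 2 * n}"
    unfolding feasible_schedule_def using distinct_card card_all_ops by fastforce
  then show ?thesis by (rule finite_subset) (intro finite_lists_length_le finite_all_ops)
qed

lemma OPT_le: "feasible_schedule n \<sigma> \<Longrightarrow> OPT n t p \<le> cost n t p \<sigma>"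
  unfolding OPT_def using feasible_finite[of n]
  by (intro Min_le) (auto simp: setcompr_eq_image)

lemma OPT_pos:
  assumes nn: "\<forall>j. t j \<ge> 0 \<and> p j \<ge> 0" and j0: "j0 < n" "p j0 > 0"
  shows "OPT n t p > 0"
proof -
  have fin: "finite {cost n t p \<sigma> | \<sigma>. feasible_schedule n \<sigma>}"
    using feasible_finite[of n] by (auto simp: setcompr_eq_image)
  have "OPT n t p \<in> {cost n t p \<sigma> | \<sigma>. feasible_schedule n \<sigma>}"
    unfolding OPT_def using fin opt_sched_feasible[of n] by (intro Min_in) auto
  then obtain \<sigma> where f: "feasible_schedule n \<sigma>" and o: "OPT n t p = cost n t p \<sigma>" by auto
  have d: "distinct \<sigma>" and s: "set \<sigma> = all_ops n" using f unfolding feasible_schedule_def by auto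
  have ol: "op_len t p x \<ge> 0" for x using nn by (cases x) auto
  have ca: "completion_at t p \<sigma> i \<ge> 0" for i unfolding completion_at_def using ol by (intro sum_nonneg) auto
  have "Proc j0 \<in> set \<sigma>" using s j0 unfolding all_ops_def by auto
  then obtain i where i: "i < length \<sigma>" "\<sigma> ! i = Proc j0" by (auto simp: in_set_conv_nth)
  have "compl_time t p \<sigma> j0 = completion_at t p \<sigma> i"
    unfolding compl_time_def using the_pos[OF d i] by simp
  also have "\<dots> \<ge> op_len t p (\<sigma> ! i)" unfolding completion_at_def
    using ol by (intro member_le_sum) auto
  finally have "compl_time t p \<sigma> j0 > 0" using i j0 by simp
  also have "compl_time t p \<sigma> j0 \<le> cost n t p \<sigma>" unfolding cost_def compl_time_def
    using ca j0 by (intro member_le_sum) auto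
  finally show ?thesis using o by simp
qed

definition it :: "nat \<Rightarrow> real \<Rightarrow> nat \<Rightarrow> real" where
  "it k \<epsilon> j = (if j < k then 1 + 2*\<epsilon> else 1)"
definition ip :: "real \<Rightarrow> nat \<Rightarrow> real \<Rightarrow> nat \<Rightarrow> real" where
  "ip \<beta> k \<epsilon> j = (if j < k then 0 else \<beta>*(1+\<epsilon>))"

locale inst =
  fixes \<beta> \<epsilon> :: real and k m :: nat and \<sigma> :: "operation list"
  assumes bpos: "\<beta> > 0" and epos: "\<epsilon> > 0"
    and run: "beta_sort_run \<beta> (k+m) (it k \<epsilon>) (ip \<beta> k \<epsilon>) \<sigma>"
begin

abbreviation "n \<equiv> k + m"
abbreviation "A \<equiv> {k..<k+m}"
abbreviation "pr \<equiv> priority \<beta> (it k \<epsilon>) (ip \<beta> k \<epsilon>)"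

lemma dist: "distinct \<sigma>" and sset: "set \<sigma> = all_ops n" and len: "length \<sigma> = 2 * n"
  using run_set[OF run] by auto

lemma av: "q < 2*n \<Longrightarrow> \<sigma> ! q \<in> available n (take q \<sigma>)"
  and mn: "q < 2*n \<Longrightarrow> x \<in> available n (take q \<sigma>) \<Longrightarrow> pr (\<sigma> ! q) \<le> pr x"
  using run unfolding beta_sort_run_def by auto

lemma card_take: "q \<le> 2*n \<Longrightarrow> card (set (take q \<sigma>)) = q"
  using dist len by (simp add: distinct_card)

lemma stn: "q \<le> 2*n \<Longrightarrow> set (take q \<sigma>) = (\<lambda>i. \<sigma> ! i) ` {..<q}"
  using len by (simp add: set_take_nth)

lemma pr_simps: "pr (Test j) = (if j < k then \<beta>*(1+2*\<epsilon>) else \<beta>)"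
  "pr (Proc j) = (if j < k then 0 else \<beta>*(1+\<epsilon>))"
  by (auto simp: it_def ip_def)

lemma ineqs: "\<beta> < \<beta>*(1+\<epsilon>)" "\<beta>*(1+\<epsilon>) < \<beta>*(1+2*\<epsilon>)" "0 < \<beta>" "\<beta> < \<beta>*(1+2*\<epsilon>)" "0 < \<beta>*(1+2*\<epsilon>)" "0 < \<beta>*(1+\<epsilon>)"
  using bpos epos by (auto simp: algebra_simps intro!: add_pos_pos)

lemma prT: "pr (Test j) = (if j < k then \<beta>*(1+2*\<epsilon>) else \<beta>)"
  by (simp add: it_def)
lemma prP: "pr (Proc j) = (if j < k then 0 else \<beta>*(1+\<epsilon>))"
  by (simp add: ip_def)

lemma phaseA: "q < m \<Longrightarrow> \<sigma> ! q \<in> Test ` A"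
proof (induction q rule: less_induct)
  case (less q)
  have qn: "q < 2*n" using less.prems by simp
  have sub: "set (take q \<sigma>) \<subseteq> Test ` A"
    using less stn[of q] qn by auto
  have "card (set (take q \<sigma>)) < card (Test ` A)"
    using card_take[of q] qn less.prems by (simp add: card_image inj_on_def)
  then obtain y where y: "y \<in> Test ` A" "y \<notin> set (take q \<sigma>)"
    by (metis psubsetI psubset_imp_ex_mem Diff_iff less_irrefl sub)
  then obtain j where j: "y = Test j" "j \<in> A" by auto
  have "y \<in> available n (take q \<sigma>)" using y j unfolding available_def by auto
  then have "pr (\<sigma> ! q) \<le> pr y" using mn[OF qn] by blast
  then have le: "pr (\<sigma> ! q) \<le> \<beta>" using j by (simp add: pr_simps it_def ip_def)
  have a: "\<sigma> ! q \<in> available n (take q \<sigma>)" by (rule av[OF qn])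
  show ?case
  proof (cases "\<sigma> ! q")
    case (Test j')
    then have "j' < n" using a unfolding available_def by auto
    moreover have "\<not> j' < k"
    proof
      assume "j' < k"
      then have "pr (\<sigma> ! q) = \<beta>*(1+2*\<epsilon>)" using Test prT[of j'] by simp
      then show False using le ineqs(4) by simp
    qed
    ultimately show ?thesis using Test by auto
  next
    case (Proc j')
    then have "Test j' \<in> set (take q \<sigma>)" using a unfolding available_def by auto
    then have "j' \<in> A" using sub by auto
    then have "pr (\<sigma> ! q) = \<beta>*(1+\<epsilon>)" using Proc prP[of j'] by simp
    then show ?thesis using le ineqs(1) by simp
  qed
qed

lemma takeA: "set (take m \<sigma>) = Test ` A"
proof (rule card_subset_eq)
  show "finite (Test ` A)" by simp
  show "set (take m \<sigma>) \<subseteq> Test ` A" using phaseA stn[of m] by auto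
  show "card (set (take m \<sigma>)) = card (Test ` A)" using card_take[of m]
    by (simp add: card_image inj_on_def)
qed

lemma phaseB: "m \<le> q \<Longrightarrow> q < 2*m \<Longrightarrow> \<sigma> ! q \<in> Proc ` A"
proof (induction q rule: less_induct)
  case (less q)
  have qn: "q < 2*n" using less.prems by simp
  have tA: "Test ` A \<subseteq> set (take q \<sigma>)"
    using takeA set_take_subset_set_take[of m q \<sigma>] less.prems by auto
  have sub: "set (take q \<sigma>) \<subseteq> Test ` A \<union> Proc ` A"
  proof
    fix x assume "x \<in> set (take q \<sigma>)"
    then obtain i where i: "i < q" "x = \<sigma> ! i" using stn[of q] qn by auto
    show "x \<in> Test ` A \<union> Proc ` A"
    proof (cases "i < m")
      case True then show ?thesis using phaseA i by auto
    next
      case False then show ?thesis using less.IH[of i] i less.prems by auto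
    qed
  qed
  have "card (set (take q \<sigma>)) < card (Test ` A \<union> Proc ` A)"
    using card_take[of q] qn less.prems
    by (subst card_Un_disjoint) (auto simp: card_image inj_on_def)
  then obtain y where y: "y \<in> Test ` A \<union> Proc ` A" "y \<notin> set (take q \<sigma>)"
    by (metis psubsetI psubset_imp_ex_mem Diff_iff less_irrefl sub)
  have "y \<notin> Test ` A" using y(2) tA by blast
  then obtain j where j: "y = Proc j" "j \<in> A" using y(1) by blast
  have tj: "Test j \<in> set (take q \<sigma>)" using j(2) tA by blast
  have "y \<in> available n (take q \<sigma>)" unfolding available_def using y(2) j(1) tj j(2) by auto
  then have "pr (\<sigma> ! q) \<le> pr y" using mn[OF qn] by blast
  then have le: "pr (\<sigma> ! q) \<le> \<beta>*(1+\<epsilon>)" using j by (simp add: pr_simps it_def ip_def)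
  have a: "\<sigma> ! q \<in> available n (take q \<sigma>)" by (rule av[OF qn])
  show ?case
  proof (cases "\<sigma> ! q")
    case (Test j')
    then have "j' < n" "Test j' \<notin> set (take q \<sigma>)" using a unfolding available_def by auto
    then have "j' < k" using tA by (metis atLeastLessThan_iff image_eqI not_le subsetD)
    then have "pr (\<sigma> ! q) = \<beta>*(1+2*\<epsilon>)" using Test prT[of j'] by simp
    then show ?thesis using le ineqs(2) by simp
  next
    case (Proc j')
    then have "Test j' \<in> set (take q \<sigma>)" using a unfolding available_def by auto
    then have "j' \<in> A" using sub by auto
    then show ?thesis using Proc by auto
  qed
qed

lemma take2A: "set (take (2*m) \<sigma>) = Test ` A \<union> Proc ` A"
proof (rule card_subset_eq)
  show "finite (Test ` A \<union> Proc ` A)" by simp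
  show "set (take (2*m) \<sigma>) \<subseteq> Test ` A \<union> Proc ` A"
  proof
    fix x assume "x \<in> set (take (2*m) \<sigma>)"
    then obtain i where i: "i < 2*m" "x = \<sigma> ! i" using stn[of "2*m"] by auto
    then show "x \<in> Test ` A \<union> Proc ` A" using phaseA phaseB by (cases "i < m") auto
  qed
  show "card (set (take (2*m) \<sigma>)) = card (Test ` A \<union> Proc ` A)" using card_take[of "2*m"]
    by (subst card_Un_disjoint) (auto simp: card_image inj_on_def)
qed

lemma phaseC: "l \<le> k \<Longrightarrow> \<exists>J \<subseteq> {..<k}. set (take (2*m+2*l) \<sigma>) = Test ` A \<union> Proc ` A \<union> Test ` J \<union> Proc ` J
   \<and> (\<forall>q. 2*m \<le> q \<and> q < 2*m+2*l \<longrightarrow> (even q \<longrightarrow> \<sigma> ! q \<in> Test ` {..<k}) \<and> (odd q \<longrightarrow> \<sigma> ! q \<in> Proc ` {..<k}))"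
proof (induction l)
  case 0 then show ?case using take2A by (intro exI[of _ "{}"]) auto
next
  case (Suc l)
  then obtain J where J: "J \<subseteq> {..<k}" and S: "set (take (2*m+2*l) \<sigma>) = Test ` A \<union> Proc ` A \<union> Test ` J \<union> Proc ` J"
    and P: "\<forall>q. 2*m \<le> q \<and> q < 2*m+2*l \<longrightarrow> (even q \<longrightarrow> \<sigma> ! q \<in> Test ` {..<k}) \<and> (odd q \<longrightarrow> \<sigma> ! q \<in> Proc ` {..<k})"
    by auto
  define q0 where "q0 = 2*m+2*l"
  have q0n: "q0 < 2*n" "Suc q0 < 2*n" using Suc.prems unfolding q0_def by auto
  have a0: "\<sigma> ! q0 \<in> available n (take q0 \<sigma>)" by (rule av[OF q0n(1)])
  obtain j0 where j0: "\<sigma> ! q0 = Test j0" "j0 < k" "Test j0 \<notin> set (take q0 \<sigma>)"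
  proof (cases "\<sigma> ! q0")
    case (Test j')
    then have "j' < n" "Test j' \<notin> set (take q0 \<sigma>)" using a0 unfolding available_def by auto
    then have "j' < k" using S unfolding q0_def by auto
    then show ?thesis using that Test \<open>Test j' \<notin> set (take q0 \<sigma>)\<close> by auto
  next
    case (Proc j')
    then have "Test j' \<in> set (take q0 \<sigma>)" "Proc j' \<notin> set (take q0 \<sigma>)" using a0 unfolding available_def by auto
    then show ?thesis using S unfolding q0_def by auto
  qed
  have S1: "set (take (Suc q0) \<sigma>) = insert (Test j0) (set (take q0 \<sigma>))"
    using q0n len by (simp add: take_Suc_conv_app_nth j0(1))
  have pj0: "Proc j0 \<notin> set (take q0 \<sigma>)" using S j0 unfolding q0_def by auto
  have "Proc j0 \<in> available n (take (Suc q0) \<sigma>)"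
    unfolding available_def using S1 pj0 j0 by auto
  then have "pr (\<sigma> ! Suc q0) \<le> pr (Proc j0)" using mn[OF q0n(2)] by blast
  then have le: "pr (\<sigma> ! Suc q0) \<le> 0" using j0 by (simp add: pr_simps it_def ip_def)
  have a1: "\<sigma> ! Suc q0 \<in> available n (take (Suc q0) \<sigma>)" by (rule av[OF q0n(2)])
  have j1: "\<sigma> ! Suc q0 = Proc j0"
  proof (cases "\<sigma> ! Suc q0")
    case (Test j')
    have "pr (Test j') \<le> 0" using le Test by simp
    then have False using prT[of j'] ineqs(3,5) by (cases "j' < k") simp_all
    then show ?thesis ..
  next
    case (Proc j')
    then have "Test j' \<in> set (take (Suc q0) \<sigma>)" "Proc j' \<notin> set (take (Suc q0) \<sigma>)" using a1 unfolding available_def by auto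
    moreover have "j' < k"
    proof (rule ccontr)
      assume "\<not> j' < k"
      then have "pr (Proc j') = \<beta>*(1+\<epsilon>)" using prP[of j'] by simp
      then show False using le Proc ineqs(6) by simp
    qed
    ultimately show ?thesis using S1 S Proc unfolding q0_def by auto
  qed
  have S2: "set (take (2*m+2*Suc l) \<sigma>) = Test ` A \<union> Proc ` A \<union> Test ` (insert j0 J) \<union> Proc ` (insert j0 J)"
  proof -
    have "2*m+2*Suc l = Suc (Suc q0)" unfolding q0_def by simp
    then have "set (take (2*m+2*Suc l) \<sigma>) = insert (Proc j0) (set (take (Suc q0) \<sigma>))"
      using q0n len by (simp add: take_Suc_conv_app_nth j1 insert_commute)
    then show ?thesis using S1 S unfolding q0_def by auto
  qed
  have P2: "\<forall>q. 2*m \<le> q \<and> q < 2*m+2*Suc l \<longrightarrow> (even q \<longrightarrow> \<sigma> ! q \<in> Test ` {..<k}) \<and> (odd q \<longrightarrow> \<sigma> ! q \<in> Proc ` {..<k})"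
  proof (intro allI impI)
    fix q assume q: "2*m \<le> q \<and> q < 2*m+2*Suc l"
    show "(even q \<longrightarrow> \<sigma> ! q \<in> Test ` {..<k}) \<and> (odd q \<longrightarrow> \<sigma> ! q \<in> Proc ` {..<k})"
    proof (cases "q < q0")
      case True then show ?thesis using P q unfolding q0_def by auto
    next
      case False
      then have "q = q0 \<or> q = Suc q0" using q unfolding q0_def by auto
      then show ?thesis using j0 j1 unfolding q0_def by auto
    qed
  qed
  have "insert j0 J \<subseteq> {..<k}" using J j0 by auto
  then show ?case using S2 P2 by blast
qed

lemma classify:
  assumes q: "q < 2*n"
  shows "q < m \<Longrightarrow> \<sigma> ! q \<in> Test ` A"
    and "m \<le> q \<Longrightarrow> q < 2*m \<Longrightarrow> \<sigma> ! q \<in> Proc ` A"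
    and "2*m \<le> q \<Longrightarrow> even q \<Longrightarrow> \<sigma> ! q \<in> Test ` {..<k}"
    and "2*m \<le> q \<Longrightarrow> odd q \<Longrightarrow> \<sigma> ! q \<in> Proc ` {..<k}"
proof -
  have "\<forall>q. 2*m \<le> q \<and> q < 2*m+2*k \<longrightarrow> (even q \<longrightarrow> \<sigma> ! q \<in> Test ` {..<k}) \<and> (odd q \<longrightarrow> \<sigma> ! q \<in> Proc ` {..<k})"
    using phaseC[of k] by blast
  then show "q < m \<Longrightarrow> \<sigma> ! q \<in> Test ` A"
    and "m \<le> q \<Longrightarrow> q < 2*m \<Longrightarrow> \<sigma> ! q \<in> Proc ` A"
    and "2*m \<le> q \<Longrightarrow> even q \<Longrightarrow> \<sigma> ! q \<in> Test ` {..<k}"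
    and "2*m \<le> q \<Longrightarrow> odd q \<Longrightarrow> \<sigma> ! q \<in> Proc ` {..<k}"
    using phaseA phaseB q by (simp_all add: algebra_simps)
qed

end

definition wf :: "real \<Rightarrow> nat \<Rightarrow> nat \<Rightarrow> real" where
  "wf \<beta> m q = (if q < m then 1 else if q < 2*m then \<beta> else if even q then 1 else 0)"
definition Wf :: "real \<Rightarrow> nat \<Rightarrow> nat \<Rightarrow> real" where
  "Wf \<beta> m i = (\<Sum>q\<le>i. wf \<beta> m q)"
definition isP :: "nat \<Rightarrow> nat \<Rightarrow> bool" where
  "isP m q \<longleftrightarrow> (m \<le> q \<and> q < 2*m) \<or> (2*m \<le> q \<and> odd q)"
definition Gf :: "real \<Rightarrow> nat \<Rightarrow> nat \<Rightarrow> real" where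
  "Gf \<beta> m N = (\<Sum>i<N. if isP m i then Wf \<beta> m i else 0)"

lemma Wf_closed: "Wf \<beta> m i = (if i < m then real i + 1 else if i < 2*m then real m + \<beta> * (real i + 1 - real m)
    else real m + \<beta> * real m + real ((i - 2*m) div 2 + 1))"
proof (induction i)
  case 0 then show ?case by (auto simp: Wf_def wf_def)
next
  case (Suc i)
  have "Wf \<beta> m (Suc i) = Wf \<beta> m i + wf \<beta> m (Suc i)" by (simp add: Wf_def)
  also have "\<dots> = (if Suc i < m then real (Suc i) + 1 else if Suc i < 2*m then real m + \<beta> * (real (Suc i) + 1 - real m)
    else real m + \<beta> * real m + real ((Suc i - 2*m) div 2 + 1))"
  proof -
    consider "Suc i < m" | "Suc i = m" | "m < Suc i \<and> Suc i < 2*m" | "Suc i = 2*m" | "2*m < Suc i" by linarith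
    then show ?thesis
    proof cases
      case 1 then show ?thesis using Suc by (simp add: wf_def)
    next
      case 2 then show ?thesis using Suc by (simp add: wf_def)
    next
      case 3 then show ?thesis using Suc by (simp add: wf_def of_nat_diff algebra_simps)
    next
      case 4
      then have "i = 2*m - 1" "m > 0" by auto
      then show ?thesis using Suc 4 by (auto simp: wf_def of_nat_diff algebra_simps)
    next
      case 5
      then have ge: "2*m \<le> i" by auto
      define d where "d = i - 2*m"
      have e: "Suc i - 2*m = Suc d" "i - 2*m = d" using ge unfolding d_def by auto
      have p: "even (Suc i) \<longleftrightarrow> odd d" using ge unfolding d_def by presburger
      have q: "Suc d div 2 = d div 2 + (if odd d then 1 else 0)" by presburger
      have w: "wf \<beta> m (Suc i) = (if even (Suc i) then 1 else 0)" using 5 by (simp add: wf_def)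
      have "\<not> i < m" "\<not> i < 2*m" "\<not> Suc i < m" "\<not> Suc i < 2*m" using ge by auto
      then show ?thesis unfolding Suc.IH w e using p q by simp
    qed
  qed
  finally show ?case .
qed

lemma Gf_zero: "N \<le> m \<Longrightarrow> Gf \<beta> m N = 0"
  unfolding Gf_def isP_def by (intro sum.neutral) auto

lemma Gf_1: "a \<le> m \<Longrightarrow> Gf \<beta> m (m + a) = real a * real m + \<beta> * real a * (real a + 1) / 2"
proof (induction a)
  case 0 then show ?case by (simp add: Gf_zero)
next
  case (Suc a)
  have "Gf \<beta> m (m + Suc a) = Gf \<beta> m (m + a) + (if isP m (m+a) then Wf \<beta> m (m+a) else 0)"
    by (simp add: Gf_def)
  also have "\<dots> = Gf \<beta> m (m + a) + real m + \<beta> * (real a + 1)"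
    using Suc.prems by (simp add: isP_def Wf_closed)
  finally show ?case using Suc by (simp add: algebra_simps add_divide_distrib)
qed

lemma Gf_2: "Gf \<beta> m (2*m + 2*l) = real m * real m + \<beta> * real m * (real m + 1) / 2
   + real l * (real m + \<beta> * real m) + real l * (real l + 1) / 2"
proof (induction l)
  case 0 then show ?case using Gf_1[of m m \<beta>] by (simp add: mult_2)
next
  case (Suc l)
  have a: "2*m + 2*Suc l = Suc (Suc (2*m+2*l))" by simp
  have "Gf \<beta> m (2*m + 2*Suc l) = Gf \<beta> m (2*m + 2*l) + (if isP m (2*m+2*l) then Wf \<beta> m (2*m+2*l) else 0)
      + (if isP m (Suc (2*m+2*l)) then Wf \<beta> m (Suc (2*m+2*l)) else 0)"
    unfolding a by (simp add: Gf_def)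
  also have "\<dots> = Gf \<beta> m (2*m + 2*l) + real m + \<beta> * real m + real l + 1"
    by (simp add: isP_def Wf_closed)
  finally show ?case using Suc by (simp add: algebra_simps add_divide_distrib)
qed

definition vf :: "real \<Rightarrow> nat \<Rightarrow> nat \<Rightarrow> real" where
  "vf \<beta> k i = (if i < k then 1 else 1 + \<beta>)"

lemma Vf_closed: "(\<Sum>i\<le>j. vf \<beta> k i) = (if j < k then real j + 1 else real k + (1+\<beta>) * (real j + 1 - real k))"
proof (induction j)
  case 0 then show ?case by (auto simp: vf_def)
next
  case (Suc j)
  then show ?case
    by (cases "Suc j < k"; cases "Suc j = k") (auto simp: vf_def of_nat_diff algebra_simps)
qed

lemma Uf_0: "(\<Sum>j<k. \<Sum>i\<le>j. vf \<beta> k i) = real k * (real k + 1) / 2"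
proof -
  have "\<And>l. l \<le> k \<Longrightarrow> (\<Sum>j<l. \<Sum>i\<le>j. vf \<beta> k i) = real l * (real l + 1) / 2"
  proof -
    fix l show "l \<le> k \<Longrightarrow> (\<Sum>j<l. \<Sum>i\<le>j. vf \<beta> k i) = real l * (real l + 1) / 2"
      by (induction l) (auto simp: Vf_closed algebra_simps add_divide_distrib)
  qed
  then show ?thesis by simp
qed

lemma Uf: "(\<Sum>j<k+m. \<Sum>i\<le>j. vf \<beta> k i) = real k * (real k + 1) / 2 + real k * real m + (1+\<beta>) * real m * (real m + 1) / 2"
proof (induction m)
  case 0 then show ?case using Uf_0 by simp
next
  case (Suc m)
  have "(\<Sum>j<k+Suc m. \<Sum>i\<le>j. vf \<beta> k i) = (\<Sum>j<k+m. \<Sum>i\<le>j. vf \<beta> k i) + (\<Sum>i\<le>k+m. vf \<beta> k i)"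
    by simp
  also have "(\<Sum>i\<le>k+m. vf \<beta> k i) = real k + (1+\<beta>) * (real m + 1)"
    by (simp add: Vf_closed)
  finally show ?case using Suc by (simp add: algebra_simps add_divide_distrib)
qed

context inst begin

lemma len_ge: "q < 2*n \<Longrightarrow> op_len (it k \<epsilon>) (ip \<beta> k \<epsilon>) (\<sigma> ! q) \<ge> wf \<beta> m q \<and> is_proc (\<sigma> ! q) = isP m q"
proof -
  assume q: "q < 2*n"
  consider "q < m" | "m \<le> q \<and> q < 2*m" | "2*m \<le> q \<and> even q" | "2*m \<le> q \<and> odd q" by linarith
  then show ?thesis
  proof cases
    case 1 then obtain j where "\<sigma> ! q = Test j" "k \<le> j" using classify(1)[OF q] by auto
    then show ?thesis using 1 by (simp add: it_def wf_def isP_def)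
  next
    case 2 then obtain j where "\<sigma> ! q = Proc j" "k \<le> j" using classify(2)[OF q] by auto
    then show ?thesis using 2 ineqs(1) by (simp add: ip_def wf_def isP_def)
  next
    case 3 then obtain j where "\<sigma> ! q = Test j" "j < k" using classify(3)[OF q] by auto
    then show ?thesis using 3 epos by (simp add: it_def wf_def isP_def)
  next
    case 4 then obtain j where "\<sigma> ! q = Proc j" "j < k" using classify(4)[OF q] by auto
    then show ?thesis using 4 by (simp add: ip_def wf_def isP_def)
  qed
qed

lemma cost_alg: "cost n (it k \<epsilon>) (ip \<beta> k \<epsilon>) \<sigma> \<ge> Gf \<beta> m (2*m+2*k)"
proof -
  have "cost n (it k \<epsilon>) (ip \<beta> k \<epsilon>) \<sigma> = (\<Sum>i<2*n. if is_proc (\<sigma> ! i) then completion_at (it k \<epsilon>) (ip \<beta> k \<epsilon>) \<sigma> i else 0)"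
    using cost_positions[OF dist sset] len by simp
  also have "\<dots> \<ge> (\<Sum>i<2*n. if isP m i then Wf \<beta> m i else 0)"
  proof (rule sum_mono)
    fix i assume "i \<in> {..<2*n}"
    then have i: "i < 2*n" by simp
    have "Wf \<beta> m i \<le> completion_at (it k \<epsilon>) (ip \<beta> k \<epsilon>) \<sigma> i"
      unfolding Wf_def completion_at_def
      by (rule sum_mono) (use len_ge i in auto)
    then show "(if isP m i then Wf \<beta> m i else 0) \<le> (if is_proc (\<sigma> ! i) then completion_at (it k \<epsilon>) (ip \<beta> k \<epsilon>) \<sigma> i else 0)"
      using len_ge[OF i] by simp
  qed
  finally show ?thesis unfolding Gf_def by (simp add: algebra_simps)
qed

end

lemma key_ineq:
  fixes \<beta> \<delta> r x K M :: real
  assumes b: "\<beta> \<ge> 1" and d: "\<delta> > 0" and r1: "r > 1" and r2: "r < 1 + \<beta>"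
    and req: "\<beta>*r^2 - r - \<beta>^2 - \<beta> + 1 = 0"
    and xdef: "x = (1+\<beta>-r)/(r-1)"
    and K1: "K \<ge> x*M" and K2: "K \<le> x*M + 1" and M1: "M \<ge> 1"
    and M2: "M \<ge> ((2*r-1)/2 + r*(x+1+\<beta>)/2) / (\<delta>*(1+\<beta>)/4)"
  shows "M*M + \<beta>*M*(M+1)/2 + K*(M+\<beta>*M) + K*(K+1)/2 \<ge>
         (r - \<delta>/2) * (K*(K+1)/2 + K*M + (1+\<beta>)*M*(M+1)/2)"
proof -
  have xr: "x*(r-1) = 1+\<beta>-r" using xdef r1 by simp
  have x0: "x > 0" using xdef r1 r2 by simp
  have sq: "(1+\<beta>-r)^2 = (r-1)*(r+r*\<beta>-2-\<beta>)" using req by (simp add: power2_eq_square algebra_simps)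
  have "(r-1)*((1-r)*x^2) = (r-1)*(2+\<beta>-r-r*\<beta>)"
  proof -
    have "(r-1)*((1-r)*x^2) = -((x*(r-1))^2)" by (simp add: power2_eq_square algebra_simps)
    also have "\<dots> = -((1+\<beta>-r)^2)" using xr by simp
    also have "\<dots> = (r-1)*(2+\<beta>-r-r*\<beta>)" using sq by (simp add: algebra_simps)
    finally show ?thesis .
  qed
  then have x2: "(1-r)*x^2 = 2+\<beta>-r-r*\<beta>" using r1 by simp
  define L2 where "L2 = (1+\<beta>/2)*M^2 + (1+\<beta>)*K*M + K^2/2"
  define U2 where "U2 = K^2/2 + K*M + (1+\<beta>)/2*M^2"
  define L1 where "L1 = \<beta>*M/2 + K/2"
  define U1 where "U1 = K/2 + (1+\<beta>)*M/2"
  have id: "L2 - r*U2 = (1-r)/2*(K - x*M)^2"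
  proof -
    have a: "(1-r)*x = -(1+\<beta>-r)" using xr by (simp add: algebra_simps)
    have "(1-r)/2*(K - x*M)^2 = (1-r)/2*K^2 - ((1-r)*x)*K*M + ((1-r)*x^2)/2*M^2"
      by (simp add: power2_eq_square field_simps)
    also have "\<dots> = (1-r)/2*K^2 + (1+\<beta>-r)*K*M + (2+\<beta>-r-r*\<beta>)/2*M^2"
      unfolding a x2 by (simp add: algebra_simps)
    finally have e: "(1-r)/2*(K - x*M)^2 = (1-r)/2*K^2 + (1+\<beta>-r)*K*M + (2+\<beta>-r-r*\<beta>)/2*M^2" .
    have "L2 - r*U2 = (1-r)/2*K^2 + (1+\<beta>-r)*K*M + (2+\<beta>-r-r*\<beta>)/2*M^2"
      unfolding L2_def U2_def by (simp add: field_simps)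
    then show ?thesis using e by simp
  qed
  have sqb: "(K - x*M)^2 \<le> 1"
  proof -
    have "0 \<le> K - x*M" "K - x*M \<le> 1" using K1 K2 by auto
    then show ?thesis by (simp add: power_le_one)
  qed
  have t1: "(1-r)/2*(K - x*M)^2 \<ge> (1-r)/2"
  proof -
    have "(1-r)/2*1 \<le> (1-r)/2*(K - x*M)^2"
      by (rule mult_left_mono_neg) (use sqb r1 in auto)
    then show ?thesis by simp
  qed
  have K0: "K \<ge> 0" using K1 x0 M1 by (smt (verit) mult_pos_pos)
  have U2b: "U2 \<ge> (1+\<beta>)/2*M^2" unfolding U2_def using K0 M1 by simp
  have U1b: "U1 \<le> (x*M+1)/2 + (1+\<beta>)*M/2" unfolding U1_def using K2 by simp
  have L1b: "L1 \<ge> 0" unfolding L1_def using K0 M1 b by simp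
  have c: "L2 + L1 - (r-\<delta>/2)*(U2+U1) \<ge> (1-r)/2 + \<delta>/2*((1+\<beta>)/2*M^2) - r*((x*M+1)/2 + (1+\<beta>)*M/2)"
  proof -
    have "L2 + L1 - (r-\<delta>/2)*(U2+U1) = (L2 - r*U2) + \<delta>/2*U2 + L1 - r*U1 + \<delta>/2*U1"
      by (simp add: algebra_simps)
    moreover have "\<delta>/2*U2 \<ge> \<delta>/2*((1+\<beta>)/2*M^2)" using U2b d by simp
    moreover have "r*U1 \<le> r*((x*M+1)/2 + (1+\<beta>)*M/2)" using U1b r1 by simp
    moreover have "\<delta>/2*U1 \<ge> 0" unfolding U1_def using d K0 M1 b by simp
    ultimately show ?thesis using id t1 L1b by linarith
  qed
  define D where "D = \<delta>*(1+\<beta>)/4"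
  define E where "E = (2*r-1)/2 + r*(x+1+\<beta>)/2"
  have D0: "D > 0" unfolding D_def using d b by simp
  have ME: "M*D \<ge> E" using M2 D0 unfolding D_def E_def by (simp add: pos_divide_le_eq)
  have "(1-r)/2 + \<delta>/2*((1+\<beta>)/2*M^2) - r*((x*M+1)/2 + (1+\<beta>)*M/2) = D*M^2 - ((2*r-1)/2 + r*(x+1+\<beta>)/2*M)"
    unfolding D_def by (simp add: field_simps)
  also have "\<dots> \<ge> M*E - E*M"
  proof -
    have "D*M^2 = M*(M*D)" by (simp add: power2_eq_square)
    also have "\<dots> \<ge> M*E" using ME M1 by simp
    finally have a: "D*M^2 \<ge> M*E" .
    have h0: "0 \<le> (2*r-1)/2*(M-1)" using M1 r1 by simp
    have h1: "E*M = (2*r-1)/2*M + r*(x+1+\<beta>)/2*M" unfolding E_def by (simp add: algebra_simps)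
    have h2: "(2*r-1)/2*(M-1) = (2*r-1)/2*M - (2*r-1)/2" by (simp add: right_diff_distrib)
    have "(2*r-1)/2 + r*(x+1+\<beta>)/2*M \<le> E*M" using h0 h1 h2 by linarith
    then show ?thesis using a by linarith
  qed
  finally have "L2 + L1 - (r-\<delta>/2)*(U2+U1) \<ge> 0" using c by simp
  moreover have "(M*M + \<beta>*M*(M+1)/2 + K*(M+\<beta>*M) + K*(K+1)/2) -
         (r - \<delta>/2) * (K*(K+1)/2 + K*M + (1+\<beta>)*M*(M+1)/2) = L2 + L1 - (r-\<delta>/2)*(U2+U1)"
    unfolding L2_def L1_def U2_def U1_def by (simp add: field_simps power2_eq_square)
  ultimately show ?thesis by linarith
qed

lemma r_facts:
  fixes \<beta> :: real
  assumes b: "\<beta> \<ge> 1"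
  defines "r \<equiv> (sqrt (4 * \<beta> * (\<beta>^2 + \<beta> - 1) + 1) + 1) / (2 * \<beta>)"
  shows "r > 1" "r < 1 + \<beta>" "\<beta>*r^2 - r - \<beta>^2 - \<beta> + 1 = 0"
proof -
  define s where "s = sqrt (4 * \<beta> * (\<beta>^2 + \<beta> - 1) + 1)"
  have bsq: "\<beta>^2 \<ge> 1" using b by (simp add: one_le_power)
  then have "\<beta>^2 + \<beta> - 1 \<ge> 0" using b by linarith
  then have "4 * \<beta> * (\<beta>^2 + \<beta> - 1) \<ge> 0" using b by simp
  then have arg: "4 * \<beta> * (\<beta>^2 + \<beta> - 1) + 1 \<ge> 0" by linarith
  have s0: "s \<ge> 0" unfolding s_def using arg by simp
  have s2: "s^2 = 4 * \<beta> * (\<beta>^2 + \<beta> - 1) + 1" unfolding s_def using arg by simp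
  have rs: "r = (s+1)/(2*\<beta>)" unfolding r_def s_def by simp
  have b0: "\<beta> > 0" using b by simp
  have "(2*\<beta>-1)^2 < s^2" unfolding s2 using b
    by (simp add: power2_eq_square algebra_simps)
  then have "2*\<beta>-1 < s" using s0 by (smt (verit) power_mono)
  then show "r > 1" unfolding rs using b0 by (simp add: pos_less_divide_eq)
  have "s^2 < (2*\<beta>^2+2*\<beta>-1)^2"
  proof -
    have "\<beta>^2 \<ge> 1" using b by (simp add: one_le_power)
    then have "4*\<beta>^2*\<beta>^2 + 4*\<beta>^2*\<beta> > 4*\<beta>^2" using b0
      by (smt (verit) mult_le_cancel_left1 mult_pos_pos zero_less_power)
    then show ?thesis unfolding s2 by (simp add: power2_eq_square algebra_simps)
  qed
  moreover have "2*\<beta>^2+2*\<beta>-1 \<ge> 0" using b bsq by linarith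
  ultimately have "s < 2*\<beta>^2+2*\<beta>-1" using s0 by (smt (verit) power_mono)
  then have "s + 1 < (1+\<beta>)*(2*\<beta>)" by (simp add: power2_eq_square algebra_simps)
  then show "r < 1 + \<beta>" unfolding rs using b0 by (simp add: divide_less_eq)
  have "\<beta>*r^2 - r = (s^2 - 1)/(4*\<beta>)" unfolding rs using b0
    by (simp add: power2_eq_square field_simps)
  also have "\<dots> = \<beta>^2 + \<beta> - 1" unfolding s2 using b0 by (simp add: field_simps power2_eq_square)
  finally show "\<beta>*r^2 - r - \<beta>^2 - \<beta> + 1 = 0" by simp
qed

theorem mainTheorem13:
  fixes \<beta> \<delta> :: real
  assumes "\<beta> \<ge> 1" and "\<delta> > 0"
  shows "\<exists>n t p. valid_instance n t p \<and> (\<exists>\<sigma>. beta_sort_run \<beta> n t p \<sigma>) \<and>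
           (\<forall>\<sigma>. beta_sort_run \<beta> n t p \<sigma> \<longrightarrow>
              cost n t p \<sigma> / OPT n t p \<ge>
                (sqrt (4 * \<beta> * (\<beta>^2 + \<beta> - 1) + 1) + 1) / (2 * \<beta>) - \<delta>)"
proof -
  note b = assms(1) and d = assms(2)
  define r where "r = (sqrt (4 * \<beta> * (\<beta>^2 + \<beta> - 1) + 1) + 1) / (2 * \<beta>)"
  have r1: "r > 1" and r2: "r < 1 + \<beta>" and req: "\<beta>*r^2 - r - \<beta>^2 - \<beta> + 1 = 0"
    using r_facts[OF b] unfolding r_def by auto
  define x where "x = (1+\<beta>-r)/(r-1)"
  have x0: "x > 0" unfolding x_def using r1 r2 by simp
  define Q where "Q = ((2*r-1)/2 + r*(x+1+\<beta>)/2) / (\<delta>*(1+\<beta>)/4)"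
  define m :: nat where "m = nat \<lceil>Q\<rceil> + 1"
  define k :: nat where "k = nat \<lceil>x * real m\<rceil>"
  define \<epsilon> where "\<epsilon> = \<delta> / (4*r)"
  have e0: "\<epsilon> > 0" unfolding \<epsilon>_def using d r1 by simp
  have b0: "\<beta> > 0" using b by simp
  have M1: "real m \<ge> 1" unfolding m_def by simp
  have M2: "real m \<ge> Q" unfolding m_def by linarith
  have xm0: "x * real m \<ge> 0" using x0 by simp
  have K1: "real k \<ge> x * real m" unfolding k_def using xm0 by linarith
  have K2: "real k \<le> x * real m + 1" unfolding k_def using xm0 by linarith
  define L where "L = real m * real m + \<beta> * real m * (real m + 1) / 2 + real k * (real m + \<beta> * real m) + real k * (real k + 1) / 2"
  define U where "U = real k * (real k + 1) / 2 + real k * real m + (1+\<beta>) * real m * (real m + 1) / 2"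
  have LU: "L \<ge> (r - \<delta>/2) * U"
    unfolding L_def U_def
    using key_ineq[OF b d r1 r2 req x_def K1 K2 M1] M2 unfolding Q_def
    by (simp add: algebra_simps)
  have U0: "U > 0"
  proof -
    have a: "(1+\<beta>) * real m * (real m + 1) / 2 > 0" using M1 b0 by simp
    have c: "real k * (real k + 1) / 2 \<ge> 0" "real k * real m \<ge> 0" by simp_all
    show ?thesis unfolding U_def using a c by linarith
  qed
  define t where "t = it k \<epsilon>"
  define p where "p = ip \<beta> k \<epsilon>"
  have valid: "valid_instance (k+m) t p"
    unfolding valid_instance_def t_def p_def it_def ip_def using e0 b0 by auto
  have tp_nn: "\<forall>j. t j \<ge> 0 \<and> p j \<ge> 0" unfolding t_def p_def it_def ip_def using e0 b0 by auto
  have pk: "p k > 0" unfolding p_def ip_def using e0 b0 by simp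
  have Opos: "OPT (k+m) t p > 0"
    by (rule OPT_pos[OF tp_nn _ pk]) (use M1 in simp)
  have Ole: "OPT (k+m) t p \<le> (1 + 2*\<epsilon>) * U"
  proof -
    have "OPT (k+m) t p \<le> cost (k+m) t p (opt_sched (k+m))" by (rule OPT_le[OF opt_sched_feasible])
    also have "\<dots> = (\<Sum>j<k+m. \<Sum>i\<le>j. t i + p i)" by (rule opt_sched_cost)
    also have "\<dots> \<le> (\<Sum>j<k+m. \<Sum>i\<le>j. (1 + 2*\<epsilon>) * vf \<beta> k i)"
    proof (intro sum_mono)
      fix j i
      show "t i + p i \<le> (1 + 2*\<epsilon>) * vf \<beta> k i"
      proof (cases "i < k")
        case True then show ?thesis unfolding t_def p_def it_def ip_def vf_def by simp
      next
        case False
        have "1 + \<beta>*(1+\<epsilon>) \<le> (1 + 2*\<epsilon>) * (1 + \<beta>)"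
          using e0 b0 by (simp add: algebra_simps)
        then show ?thesis using False unfolding t_def p_def it_def ip_def vf_def by simp
      qed
    qed
    also have "\<dots> = (1 + 2*\<epsilon>) * (\<Sum>j<k+m. \<Sum>i\<le>j. vf \<beta> k i)"
      by (simp add: sum_distrib_left)
    also have "\<dots> = (1 + 2*\<epsilon>) * U" unfolding U_def by (simp add: Uf)
    finally show ?thesis .
  qed
  have fin: "(r - \<delta>/2) / (1 + 2*\<epsilon>) \<ge> r - \<delta>"
  proof -
    have "(r - \<delta>) * (1 + 2*\<epsilon>) = r - \<delta> + 2*\<epsilon>*r - 2*\<epsilon>*\<delta>" by (simp add: algebra_simps)
    also have "2*\<epsilon>*r = \<delta>/2" unfolding \<epsilon>_def using r1 by simp
    finally have "(r - \<delta>) * (1 + 2*\<epsilon>) \<le> r - \<delta>/2" using e0 d by simp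
    then show ?thesis using e0 by (simp add: pos_le_divide_eq)
  qed
  show ?thesis
  proof (rule exI[of _ "k+m"], rule exI[of _ t], rule exI[of _ p], intro conjI allI impI)
    show "valid_instance (k+m) t p" by (rule valid)
    show "\<exists>\<sigma>. beta_sort_run \<beta> (k+m) t p \<sigma>" by (rule run_exists)
    fix \<sigma> assume run: "beta_sort_run \<beta> (k+m) t p \<sigma>"
    interpret I: inst \<beta> \<epsilon> k m \<sigma>
      by unfold_locales (use b0 e0 run in \<open>auto simp: t_def p_def\<close>)
    have cL: "cost (k+m) t p \<sigma> \<ge> L"
      using I.cost_alg Gf_2[of \<beta> m k] unfolding t_def p_def L_def by simp
    have L0: "L \<ge> 0" unfolding L_def using b0 by simp
    have "cost (k+m) t p \<sigma> / OPT (k+m) t p \<ge> L / OPT (k+m) t p"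
      using cL Opos by (simp add: divide_right_mono)
    moreover have "L / OPT (k+m) t p \<ge> L / ((1 + 2*\<epsilon>) * U)"
      using Ole Opos L0 by (intro divide_left_mono) auto
    moreover have "L / ((1 + 2*\<epsilon>) * U) \<ge> (r - \<delta>/2) / (1 + 2*\<epsilon>)"
    proof -
      have "(r - \<delta>/2) / (1 + 2*\<epsilon>) = ((r - \<delta>/2) * U) / ((1 + 2*\<epsilon>) * U)" using U0 by simp
      also have "\<dots> \<le> L / ((1 + 2*\<epsilon>) * U)" using LU U0 e0 by (intro divide_right_mono) auto
      finally show ?thesis .
    qed
    ultimately show "cost (k+m) t p \<sigma> / OPT (k+m) t p \<ge>
                (sqrt (4 * \<beta> * (\<beta>^2 + \<beta> - 1) + 1) + 1) / (2 * \<beta>) - \<delta>"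
      using fin unfolding r_def by linarith
  qed
qed

end
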